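(* Assume the setting below ($\mathcal{S}$ convex and generating $\Lambda$; conformal data $\mathcal{R}$). Then the moment map $\mu_{\mathcal{R}}$ satisfies the transversality condition at every point of $P=\mu_{\mathcal{R}}^{-1}(0)\setminus\{0\}$: for every $p\in P$ and every nonzero $a\in\mathfrak g$ there exists $a'\in\mathfrak g$ with $(I_1\,d\langle(\mu_{\mathcal R})_1,a'\rangle)_p(\mathbf{A}_p(a))\neq 0$.
   Context: $F$ is a 2-torus, Lie algebra $\mathfrak f\cong\mathbb{R}^2$, lattice $\Lambda\cong\mathbb{Z}^2$. $\mathcal{S}=\{u_1,\dots,u_k\}\subset\Lambda$ is an ordered set generating $\Lambda$, with cyclically consecutive elements linearly independent, each $u_i$ either $(p,0)$ with $p>0$ or with positive second coordinate, $u_1=(p,0)$, and convex (i.e. $u_1,\dots,u_k$ are the outward normals of a convex polygon; equivalently the associated compact toric orbifold has negative-definite intersection form). Set $v_1=u_1+u_k$, $v_i=u_i-u_{i-1}$ ($2\le i\le k$), and $\Omega:\mathbb{R}^k\to\mathfrak f$, $e_i\mapsto v_i$; $\mathfrak g=\ker\Omega$ (dimension $k-2$). Conformal data $\mathcal R$: points $\zeta_1,\dots,\zeta_k$ with $|\zeta_i|=1$, $0=\arg\zeta_1<\dots<\arg\zeta_k<2\pi$; $z_i=\zeta_i^{1/2}$ with $0\le\arg z_i<\pi$, $\boldsymbol z=(z_1,\dots,z_k)$, $\mathbb W=\mathrm{span}\{\mathrm{Re}\boldsymbol z,\mathrm{Im}\boldsymbol z\}\subset(\mathbb{R}^k)^*$,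 and $B^*:(\mathbb{R}^k)^*\to\mathfrak g^*$ a linear map with kernel $\mathbb W$. On $\mathbb{H}^k$ with coordinates $q_m=x_m+y_mj$ ($x_m,y_m\in\mathbb C$) and $I_1,I_2,I_3$ = left multiplication by $i,j,k$, let $\mathcal U=\mathbb{H}^k/\{\pm1\}$ (associated bundle of $\mathbb{HP}^{k-1}$). The torus $T^k$ = (maximal torus $\{(\lambda_1,\dots,\lambda_k):\lambda_m\in U(1)\subset\mathbb C\}$ of $Sp(k)$ acting by right multiplication $q_m\mapsto q_m\lambda_m$) modulo $(-1,\dots,-1)$ acts on $\mathcal U$; its Lie algebra is $\mathbb{R}^k$ with $e_m$ generating the rotation of the $m$-th factor, and $\mathbf A(a)$ denotes the vector field on $\mathcal U$ generated by $a\in\mathfrak g\subset\mathbb{R}^k$. Define $\nu_m:\mathcal U\to\mathrm{Im}\mathbb{H}$, $\nu_m(q)=(|x_m|^2-|y_m|^2,\ \mathrm{Re}(2ix_my_m),\ \mathrm{Im}(2ix_my_m))$, $\nu=(\nu_1,\dots,\nu_k):\mathcal U\to(\mathbb{R}^k)^*\otimes\mathrm{Im}\mathbb H$, and $\mu_{\mathcal R}=B^*\circ\nu:\mathcal U\to\mathfrak g^*\otimes\mathrm{Im}\mathbb{H}$, with components $(\mu_{\mathcal R})_1,(\mu_{\mathcal R})_2,(\mu_{\mathcal R})_3$. $I_1$ acts on 1-forms by the transpose action. *)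

theory Defs
  imports "HOL-Analysis.Analysis"
begin

(* Indices run over {1..k}.  Vectors in R^k, (R^k)^* are functions nat => real
   supported on {1..k}.  A point of H^k is q :: nat => complex * complex with
   q m = (x_m, y_m), i.e. q_m = x_m + y_m j. *)

definition det2 :: "real \<times> real \<Rightarrow> real \<times> real \<Rightarrow> real" where
  "det2 a b = fst a * snd b - snd a * fst b"

definition rvec :: "int \<times> int \<Rightarrow> real \<times> real" where
  "rvec w = (real_of_int (fst w), real_of_int (snd w))"

definition supp_in :: "nat \<Rightarrow> (nat \<Rightarrow> real) \<Rightarrow> bool" where
  "supp_in k a \<longleftrightarrow> (\<forall>i. i \<notin> {1..k} \<longrightarrow> a i = 0)"

definition admissible_S :: "nat \<Rightarrow> (nat \<Rightarrow> int \<times> int) \<Rightarrow> bool" where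
  "admissible_S k u \<longleftrightarrow>
     \<comment> \<open>S generates the lattice Z^2\<close>
     (\<forall>w :: int \<times> int. \<exists>c :: nat \<Rightarrow> int.
         w = ((\<Sum>i\<in>{1..k}. c i * fst (u i)), (\<Sum>i\<in>{1..k}. c i * snd (u i))))
     \<comment> \<open>cyclically consecutive elements linearly independent\<close>
   \<and> (\<forall>i\<in>{1..<k}. det2 (rvec (u i)) (rvec (u (i+1))) \<noteq> 0)
   \<and> det2 (rvec (u k)) (rvec (u 1)) \<noteq> 0
     \<comment> \<open>each u_i is (p,0) with p>0 or has positive second coordinate\<close>
   \<and> (\<forall>i\<in>{1..k}. (fst (u i) > 0 \<and> snd (u i) = 0) \<or> snd (u i) > 0)
     \<comment> \<open>u_1 = (p,0)\<close>
   \<and> fst (u 1) > 0 \<and> snd (u 1) = 0"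

text \<open>Convexity: u_1,...,u_k are, in this order, the outward normals of a convex
  polygon, i.e. they turn strictly counterclockwise.\<close>
definition convex_S :: "nat \<Rightarrow> (nat \<Rightarrow> int \<times> int) \<Rightarrow> bool" where
  "convex_S k u \<longleftrightarrow> (\<forall>i\<in>{2..k}. det2 (rvec (u (i-1))) (rvec (u i)) > 0)"

definition vvec :: "nat \<Rightarrow> (nat \<Rightarrow> int \<times> int) \<Rightarrow> nat \<Rightarrow> real \<times> real" where
  "vvec k u i = (if i = 1 then rvec (u 1) + rvec (u k) else rvec (u i) - rvec (u (i-1)))"

definition gset :: "nat \<Rightarrow> (nat \<Rightarrow> int \<times> int) \<Rightarrow> (nat \<Rightarrow> real) set" where
  "gset k u = {a. supp_in k a \<and> (\<Sum>i\<in>{1..k}. a i *\<^sub>R vvec k u i) = 0}"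

text \<open>Conformal data: theta i = arg zeta_i in [0,2pi), zeta_i = cis (theta i).\<close>
definition conformal_data :: "nat \<Rightarrow> (nat \<Rightarrow> real) \<Rightarrow> bool" where
  "conformal_data k \<theta> \<longleftrightarrow> \<theta> 1 = 0 \<and> (\<forall>i\<in>{1..k}. 0 \<le> \<theta> i \<and> \<theta> i < 2 * pi)
     \<and> (\<forall>i\<in>{1..k}. \<forall>j\<in>{1..k}. i < j \<longrightarrow> \<theta> i < \<theta> j)"

text \<open>z_i = zeta_i^(1/2) with 0 <= arg z_i < pi.\<close>
definition zvec :: "(nat \<Rightarrow> real) \<Rightarrow> nat \<Rightarrow> complex" where
  "zvec \<theta> i = cis (\<theta> i / 2)"

definition Wset :: "nat \<Rightarrow> (nat \<Rightarrow> real) \<Rightarrow> (nat \<Rightarrow> real) set" where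
  "Wset k \<theta> = {\<xi>. supp_in k \<xi> \<and>
      (\<exists>s t. \<forall>i\<in>{1..k}. \<xi> i = s * Re (zvec \<theta> i) + t * Im (zvec \<theta> i))}"

text \<open>B^* : (R^k)^* -> g^* linear with kernel W, encoded by the pairing
  Bs xi a = <B^* xi, a> for a in g.\<close>
definition Bstar_ok :: "nat \<Rightarrow> (nat \<Rightarrow> int \<times> int) \<Rightarrow> (nat \<Rightarrow> real)
      \<Rightarrow> ((nat \<Rightarrow> real) \<Rightarrow> (nat \<Rightarrow> real) \<Rightarrow> real) \<Rightarrow> bool" where
  "Bstar_ok k u \<theta> Bs \<longleftrightarrow>
     (\<forall>\<xi> \<eta> a. Bs (\<lambda>i. \<xi> i + \<eta> i) a = Bs \<xi> a + Bs \<eta> a)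
   \<and> (\<forall>c \<xi> a. Bs (\<lambda>i. c * \<xi> i) a = c * Bs \<xi> a)
   \<and> (\<forall>\<xi> a b. Bs \<xi> (\<lambda>i. a i + b i) = Bs \<xi> a + Bs \<xi> b)
   \<and> (\<forall>c \<xi> a. Bs \<xi> (\<lambda>i. c * a i) = c * Bs \<xi> a)
   \<and> (\<forall>\<xi>. supp_in k \<xi> \<longrightarrow> ((\<forall>a\<in>gset k u. Bs \<xi> a = 0) \<longleftrightarrow> \<xi> \<in> Wset k \<theta>))"

text \<open>Components of nu : H^k -> (R^k)^* (x) Im H.\<close>
definition nu1 :: "nat \<Rightarrow> (nat \<Rightarrow> complex \<times> complex) \<Rightarrow> nat \<Rightarrow> real" where
  "nu1 k q m = (if m \<in> {1..k} then (cmod (fst (q m)))\<^sup>2 - (cmod (snd (q m)))\<^sup>2 else 0)"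

definition nu2 :: "nat \<Rightarrow> (nat \<Rightarrow> complex \<times> complex) \<Rightarrow> nat \<Rightarrow> real" where
  "nu2 k q m = (if m \<in> {1..k} then Re (2 * \<i> * fst (q m) * snd (q m)) else 0)"

definition nu3 :: "nat \<Rightarrow> (nat \<Rightarrow> complex \<times> complex) \<Rightarrow> nat \<Rightarrow> real" where
  "nu3 k q m = (if m \<in> {1..k} then Im (2 * \<i> * fst (q m) * snd (q m)) else 0)"

text \<open>P = mu_R^{-1}(0) minus {0} (lifted to H^k; all data are {+-1}-invariant).\<close>
definition Pset :: "nat \<Rightarrow> (nat \<Rightarrow> int \<times> int) \<Rightarrow> ((nat \<Rightarrow> real) \<Rightarrow> (nat \<Rightarrow> real) \<Rightarrow> real)
      \<Rightarrow> (nat \<Rightarrow> complex \<times> complex) set" where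
  "Pset k u Bs = {q. (\<exists>m\<in>{1..k}. q m \<noteq> 0) \<and>
      (\<forall>a\<in>gset k u. Bs (nu1 k q) a = 0 \<and> Bs (nu2 k q) a = 0 \<and> Bs (nu3 k q) a = 0)}"

text \<open>Right action of the torus T^k: q_m |-> q_m lambda_m, i.e.
  (x_m + y_m j) lambda = x_m lambda + y_m conj(lambda) j.\<close>
definition tact :: "(nat \<Rightarrow> complex) \<Rightarrow> (nat \<Rightarrow> complex \<times> complex) \<Rightarrow> nat \<Rightarrow> complex \<times> complex" where
  "tact lam q m = (fst (q m) * lam m, snd (q m) * cnj (lam m))"

definition Afield :: "(nat \<Rightarrow> real) \<Rightarrow> (nat \<Rightarrow> complex \<times> complex) \<Rightarrow> nat \<Rightarrow> complex \<times> complex" where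
  "Afield a q m =
     (vector_derivative (\<lambda>t. fst (tact (\<lambda>j. cis (t * a j)) q m)) (at 0),
      vector_derivative (\<lambda>t. snd (tact (\<lambda>j. cis (t * a j)) q m)) (at 0))"

definition I1 :: "(nat \<Rightarrow> complex \<times> complex) \<Rightarrow> nat \<Rightarrow> complex \<times> complex" where
  "I1 X m = (\<i> * fst (X m), \<i> * snd (X m))"

definition dfun :: "((nat \<Rightarrow> complex \<times> complex) \<Rightarrow> real) \<Rightarrow> (nat \<Rightarrow> complex \<times> complex)
      \<Rightarrow> (nat \<Rightarrow> complex \<times> complex) \<Rightarrow> real" where
  "dfun f p X = deriv (\<lambda>t. f (\<lambda>m. p m + t *\<^sub>R X m)) 0"

end

theory Submission
  imports Defs
begin


lemma hp_trans:
  fixes u1 u2 q1 q2 w1 w2 :: real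
  assumes hu: "u2 > 0 \<or> (u2 = 0 \<and> u1 > 0)" and hv: "q2 > 0 \<or> (q2 = 0 \<and> q1 > 0)"
    and hw: "w2 > 0 \<or> (w2 = 0 \<and> w1 > 0)"
    and d1: "u1*q2 - u2*q1 > 0" and d2: "q1*w2 - q2*w1 > 0"
  shows "u1*w2 - u2*w1 > 0"
proof (rule ccontr)
  assume "\<not> ?thesis"
  hence dn: "u1*w2 - u2*w1 \<le> 0" by simp
  have i2: "(u1*w2 - u2*w1)*q2 = (u1*q2-u2*q1)*w2 + (q1*w2-q2*w1)*u2" by (simp add: algebra_simps)
  have i1: "(u1*w2 - u2*w1)*q1 = (u1*q2-u2*q1)*w1 + (q1*w2-q2*w1)*u1" by (simp add: algebra_simps)
  show False
  proof (cases "u2 > 0 \<or> w2 > 0")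
    case True
    have "(u1*q2-u2*q1)*w2 + (q1*w2-q2*w1)*u2 > 0"
    proof (cases "w2 > 0")
      case True
      hence "(u1*q2-u2*q1)*w2 > 0" using d1 by simp
      moreover have "(q1*w2-q2*w1)*u2 \<ge> 0" using d2 hu by auto
      ultimately show ?thesis by linarith
    next
      case False
      hence "u2 > 0" "w2 = 0" using \<open>u2 > 0 \<or> w2 > 0\<close> hw by auto
      hence "(q1*w2-q2*w1)*u2 > 0" using d2 by (intro mult_pos_pos) auto
      moreover have "(u1*q2-u2*q1)*w2 = 0" using \<open>w2 = 0\<close> by simp
      ultimately show ?thesis by linarith
    qed
    moreover have "(u1*w2 - u2*w1)*q2 \<le> 0" using dn hv by (auto simp: mult_nonpos_nonneg)
    ultimately show False using i2 by linarith
  next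
    case False
    hence "u2 = 0" "w2 = 0" "u1 > 0" "w1 > 0" using hu hw by auto
    hence "u1 * q2 > 0" "q2 * w1 < 0" using d1 d2 by auto
    hence "q2 > 0" using \<open>u1 > 0\<close> by (simp add: zero_less_mult_iff)
    hence "q2 * w1 > 0" using \<open>w1 > 0\<close> by simp
    thus False using \<open>q2 * w1 < 0\<close> by simp
  qed
qed

lemma abel_aux:
  fixes a f :: "nat \<Rightarrow> real"
  assumes "1 \<le> n"
  shows "(\<Sum>i=2..n. a i * (f i - f (i-1))) = (\<Sum>i=1..n-1. (a i - a (i+1)) * f i) + a n * f n - a 1 * f 1"
  using assms
proof (induction n rule: nat_induct_at_least)
  case base then show ?case by simp
next
  case (Suc n)
  have "(\<Sum>i=2..Suc n. a i * (f i - f (i-1))) = (\<Sum>i=2..n. a i * (f i - f (i-1))) + a (Suc n) * (f (Suc n) - f n)"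
    using Suc.hyps by (simp add: sum.cl_ivl_Suc)
  moreover have "(\<Sum>i=1..Suc n - 1. (a i - a (i+1)) * f i) = (\<Sum>i=1..n-1. (a i - a (i+1)) * f i) + (a n - a (n+1)) * f n"
  proof -
    have "{1..n} = insert n {1..n-1}" "n \<notin> {1..n-1}" using Suc.hyps by auto
    then show ?thesis by (simp add: algebra_simps)
  qed
  ultimately show ?case using Suc.IH by (simp add: algebra_simps)
qed

lemma abel:
  fixes a f :: "nat \<Rightarrow> real"
  assumes k: "2 \<le> k"
  shows "(\<Sum>i=1..k. a i * (if i = 1 then f 1 + f k else f i - f (i-1)))
       = (\<Sum>i=1..k. ((if i = k+1 then - a 1 else a i) - (if i+1 = k+1 then - a 1 else a (i+1))) * f i)"
proof -
  have "(\<Sum>i=1..k. a i * (if i = 1 then f 1 + f k else f i - f (i-1)))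
     = a 1 * (f 1 + f k) + (\<Sum>i=2..k. a i * (if i = 1 then f 1 + f k else f i - f (i-1)))"
    using k by (simp add: sum.atLeast_Suc_atMost numeral_2_eq_2)
  also have "(\<Sum>i=2..k. a i * (if i = 1 then f 1 + f k else f i - f (i-1))) = (\<Sum>i=2..k. a i * (f i - f (i-1)))"
    by (rule sum.cong) auto
  also have "\<dots> = (\<Sum>i=1..k-1. (a i - a (i+1)) * f i) + a k * f k - a 1 * f 1"
    using k by (intro abel_aux) simp
  finally have L: "(\<Sum>i=1..k. a i * (if i = 1 then f 1 + f k else f i - f (i-1)))
      = (\<Sum>i=1..k-1. (a i - a (i+1)) * f i) + (a k + a 1) * f k" by (simp add: algebra_simps)
  have "{1..k} = insert k {1..k-1}" "k \<notin> {1..k-1}" using k by auto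
  hence "(\<Sum>i=1..k. ((if i = k+1 then - a 1 else a i) - (if i+1 = k+1 then - a 1 else a (i+1))) * f i)
     = ((if k = k+1 then - a 1 else a k) - (if k+1 = k+1 then - a 1 else a (k+1))) * f k
       + (\<Sum>i=1..k-1. ((if i = k+1 then - a 1 else a i) - (if i+1 = k+1 then - a 1 else a (i+1))) * f i)"
    by simp
  also have "(\<Sum>i=1..k-1. ((if i = k+1 then - a 1 else a i) - (if i+1 = k+1 then - a 1 else a (i+1))) * f i)
     = (\<Sum>i=1..k-1. (a i - a (i+1)) * f i)"
    by (rule sum.cong) auto
  finally show ?thesis using L by simp
qed


lemma pivot_lemma:
  fixes U1 U2 d :: "nat \<Rightarrow> real"
  assumes k: "2 \<le> k"
    and det: "\<And>i j. 1 \<le> i \<Longrightarrow> i < j \<Longrightarrow> j \<le> k \<Longrightarrow> U1 i * U2 j - U2 i * U1 j > 0"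
    and s1: "(\<Sum>i=1..k. d i * U1 i) = 0" and s2: "(\<Sum>i=1..k. d i * U2 i) = 0"
    and j: "1 \<le> j" "j \<le> k"
    and sgA: "\<And>i. 1\<le>i \<Longrightarrow> i<j \<Longrightarrow> d i \<le> 0" and sgB: "\<And>i. j<i \<Longrightarrow> i\<le>k \<Longrightarrow> d i \<ge> 0"
  shows "\<forall>i\<in>{1..k}. d i = 0"
proof -
  define T where "T i = d i * (U1 i * U2 j - U2 i * U1 j)" for i
  have "(\<Sum>i=1..k. T i) = U2 j * (\<Sum>i=1..k. d i * U1 i) - U1 j * (\<Sum>i=1..k. d i * U2 i)"
    unfolding T_def by (simp add: sum_distrib_left sum_subtractf algebra_simps)
  hence sT: "(\<Sum>i=1..k. - T i) = 0" using s1 s2 by (simp add: sum_negf)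
  have Tn: "- T i \<ge> 0" if "i \<in> {1..k}" for i
  proof -
    consider "i < j" | "i = j" | "j < i" by linarith
    then show ?thesis
    proof cases
      case 1 with that det[of i j] j sgA[of i] show ?thesis unfolding T_def
        by (simp add: mult_nonpos_nonneg)
    next
      case 2 then show ?thesis unfolding T_def by simp
    next
      case 3
      have "U1 i * U2 j - U2 i * U1 j < 0" using det[of j i] 3 that j by (simp add: algebra_simps)
      moreover have "d i \<ge> 0" using sgB[of i] 3 that by simp
      ultimately show ?thesis unfolding T_def by (simp add: mult_nonneg_nonpos)
    qed
  qed
  have T0: "T i = 0" if "i \<in> {1..k}" for i
    using sum_nonneg_eq_0_iff[of "{1..k}" "\<lambda>i. - T i"] sT Tn that by auto
  have dz: "d i = 0" if "i \<in> {1..k}" "i \<noteq> j" for i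
  proof -
    have "U1 i * U2 j - U2 i * U1 j \<noteq> 0"
    proof (cases "i < j")
      case True with det[of i j] that j show ?thesis by auto
    next
      case False with det[of j i] that j show ?thesis by (auto simp: algebra_simps)
    qed
    with T0[OF that(1)] show ?thesis unfolding T_def by simp
  qed
  have e1: "(\<Sum>i=1..k. d i * U1 i) = d j * U1 j"
  proof -
    have "(\<Sum>i=1..k. d i * U1 i) = d j * U1 j + (\<Sum>i\<in>{1..k}-{j}. d i * U1 i)"
      by (rule sum.remove) (use j in auto)
    also have "(\<Sum>i\<in>{1..k}-{j}. d i * U1 i) = 0" by (rule sum.neutral) (use dz in auto)
    finally show ?thesis by simp
  qed
  have e2: "(\<Sum>i=1..k. d i * U2 i) = d j * U2 j"
  proof -
    have "(\<Sum>i=1..k. d i * U2 i) = d j * U2 j + (\<Sum>i\<in>{1..k}-{j}. d i * U2 i)"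
      by (rule sum.remove) (use j in auto)
    also have "(\<Sum>i\<in>{1..k}-{j}. d i * U2 i) = 0" by (rule sum.neutral) (use dz in auto)
    finally show ?thesis by simp
  qed
  obtain i0 where i0: "i0 \<in> {1..k}" "i0 \<noteq> j"
  proof (cases "j = 1")
    case True then show ?thesis using that[of 2] k by simp
  next
    case False then show ?thesis using that[of 1] k by simp
  qed
  have "U1 i0 * U2 j - U2 i0 * U1 j \<noteq> 0"
  proof (cases "i0 < j")
    case True with det[of i0 j] i0 j show ?thesis by auto
  next
    case False with det[of j i0] i0 j show ?thesis by (auto simp: algebra_simps)
  qed
  hence "U1 j \<noteq> 0 \<or> U2 j \<noteq> 0" by auto
  hence "d j = 0" using e1 e2 s1 s2 by auto
  thus ?thesis using dz by (metis)
qed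

lemma mono_lemma:
  fixes U1 U2 d :: "nat \<Rightarrow> real"
  assumes k: "2 \<le> k"
    and det: "\<And>i j. 1 \<le> i \<Longrightarrow> i < j \<Longrightarrow> j \<le> k \<Longrightarrow> U1 i * U2 j - U2 i * U1 j > 0"
    and s1: "(\<Sum>i=1..k. d i * U1 i) = 0" and s2: "(\<Sum>i=1..k. d i * U2 i) = 0"
    and mono: "\<And>i l. 1 \<le> i \<Longrightarrow> i < l \<Longrightarrow> l \<le> k \<Longrightarrow> \<not> (d i > 0 \<and> d l < 0)"
  shows "\<forall>i\<in>{1..k}. d i = 0"
proof (cases "\<exists>i\<in>{1..k}. d i > 0")
  case True
  define j where "j = (LEAST i. i \<in> {1..k} \<and> d i > 0)"
  have jP: "j \<in> {1..k} \<and> d j > 0" unfolding j_def using True by (metis (mono_tags, lifting) LeastI)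
  have jm: "\<And>i. i \<in> {1..k} \<and> d i > 0 \<Longrightarrow> j \<le> i" unfolding j_def by (rule Least_le)
  show ?thesis
  proof (rule pivot_lemma[OF k det s1 s2, of j])
    show "1 \<le> j" "j \<le> k" using jP by auto
    show "d i \<le> 0" if "1 \<le> i" "i < j" for i using jm[of i] that jP by force
    show "d i \<ge> 0" if "j < i" "i \<le> k" for i using mono[of j i] that jP by force
  qed auto
next
  case False
  show ?thesis
    by (rule pivot_lemma[OF k det s1 s2, of k]) (use False k in force)+
qed


lemma two_support:
  fixes U1 U2 d :: "nat \<Rightarrow> real"
  assumes k: "2 \<le> k"
    and det: "\<And>i j. 1 \<le> i \<Longrightarrow> i < j \<Longrightarrow> j \<le> k \<Longrightarrow> U1 i * U2 j - U2 i * U1 j > 0"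
    and s1: "(\<Sum>i=1..k. d i * U1 i) = 0" and s2: "(\<Sum>i=1..k. d i * U2 i) = 0"
    and xy: "x < y" and supp: "\<And>i. 1 \<le> i \<Longrightarrow> i \<le> k \<Longrightarrow> i \<noteq> x \<Longrightarrow> i \<noteq> y \<Longrightarrow> d i = 0"
  shows "\<forall>i\<in>{1..k}. d i = 0"
proof (cases "d x > 0 \<and> d y < 0")
  case False
  show ?thesis
  proof (rule mono_lemma[OF k det s1 s2])
    fix i l assume "1 \<le> i" "i < l" "l \<le> k"
    then show "\<not> (d i > 0 \<and> d l < 0)" using supp[of i] supp[of l] False xy
      by (cases "i = x"; cases "l = y"; force)
  qed
next
  case True
  have s1': "(\<Sum>i=1..k. (- d i) * U1 i) = 0" using s1 by (simp add: sum_negf)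
  have s2': "(\<Sum>i=1..k. (- d i) * U2 i) = 0" using s2 by (simp add: sum_negf)
  have "\<forall>i\<in>{1..k}. - d i = 0"
  proof (rule mono_lemma[OF k det s1' s2'])
    fix i l assume "1 \<le> i" "i < l" "l \<le> k"
    then show "\<not> (- d i > 0 \<and> - d l < 0)" using supp[of i] supp[of l] True xy
      by (cases "i = x"; cases "l = y"; force)
  qed
  thus ?thesis by simp
qed


locale geo =
  fixes k :: nat and U1 U2 c s R b :: "nat \<Rightarrow> real" and A B C l1 l2 :: real
  assumes k2: "2 \<le> k"
    and detU: "\<And>i j. 1 \<le> i \<Longrightarrow> i < j \<Longrightarrow> j \<le> k \<Longrightarrow> U1 i * U2 j - U2 i * U1 j > 0"
    and sum1: "(\<Sum>i=1..k. (b i - b (i+1)) * U1 i) = 0"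
    and sum2: "(\<Sum>i=1..k. (b i - b (i+1)) * U2 i) = 0"
    and c1: "c 1 = 1" and s1: "s 1 = 0" and ck: "c (k+1) = -1" and sk: "s (k+1) = 0"
    and unit: "\<And>m. 1 \<le> m \<Longrightarrow> m \<le> k+1 \<Longrightarrow> c m ^ 2 + s m ^ 2 = 1"
    and detV: "\<And>i j. 1 \<le> i \<Longrightarrow> i < j \<Longrightarrow> j \<le> k \<Longrightarrow> c i * s j - s i * c j > 0"
    and sV: "\<And>m. 2 \<le> m \<Longrightarrow> m \<le> k \<Longrightarrow> s m > 0"
    and Rnn: "\<And>m. 1 \<le> m \<Longrightarrow> m \<le> k+1 \<Longrightarrow> R m \<ge> 0"
    and RQ: "\<And>m. 1 \<le> m \<Longrightarrow> m \<le> k+1 \<Longrightarrow> R m ^ 2 = A * c m ^ 2 + 2 * B * c m * s m + C * s m ^ 2"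
    and bL: "\<And>m. 1 \<le> m \<Longrightarrow> m \<le> k+1 \<Longrightarrow> b m * R m = l1 * c m + l2 * s m"
    and Ann: "A \<ge> 0" and Cnn: "C \<ge> 0" and BAC: "B^2 \<le> A * C"
    and Rpos: "\<exists>m\<in>{1..k}. R m > 0"
begin

definition "dV i j = c i * s j - s i * c j"
definition "d i = b i - b (i+1)"

lemma dV_ge: "1 \<le> i \<Longrightarrow> i \<le> j \<Longrightarrow> j \<le> k+1 \<Longrightarrow> dV i j \<ge> 0"
proof -
  assume h: "1 \<le> i" "i \<le> j" "j \<le> k+1"
  consider "i = j" | "i < j" "j \<le> k" | "i < j" "j = k+1" using h by linarith
  then show ?thesis
  proof cases
    case 1 then show ?thesis unfolding dV_def by simp
  next
    case 2 then show ?thesis using detV[of i j] h unfolding dV_def by simp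
  next
    case 3
    have "s i \<ge> 0" using sV[of i] s1 h 3 by (cases "i = 1") auto
    then show ?thesis using 3 ck sk unfolding dV_def by simp
  qed
qed

lemma dV_succ: "1 \<le> i \<Longrightarrow> i \<le> k \<Longrightarrow> dV i (i+1) > 0"
proof -
  assume h: "1 \<le> i" "i \<le> k"
  show ?thesis
  proof (cases "i = k")
    case True then show ?thesis using sV[of k] k2 ck sk unfolding dV_def by simp
  next
    case False then show ?thesis using detV[of i "i+1"] h unfolding dV_def by simp
  qed
qed

lemma d_sum1: "(\<Sum>i=1..k. d i * U1 i) = 0" using sum1 unfolding d_def .
lemma d_sum2: "(\<Sum>i=1..k. d i * U2 i) = 0" using sum2 unfolding d_def .

end


lemma alg_id:
  fixes P1 P2 R1 R2 p r w1 w2 A B C :: real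
  assumes "p^2 = A*P1^2+2*B*P1*P2+C*P2^2" "r^2 = A* R1^2+2*B* R1* R2+C* R2^2"
  shows "2*p*r*(P1* R2-P2* R1)*(r*((A*w1+B*w2)*P1+(B*w1+C*w2)*P2)-p*((A*w1+B*w2)* R1+(B*w1+C*w2)* R2))
   + (A*(r*P1-p* R1)^2+2*B*(r*P1-p* R1)*(r*P2-p* R2)+C*(r*P2-p* R2)^2)*((r*P1+p* R1)*w2-(r*P2+p* R2)*w1) = 0"
  using assms by algebra

context geo begin

lemma caseA:
  assumes G: "A * C - B^2 > 0"
  shows "\<forall>i\<in>{1..k}. d i = 0"
proof -
  define G where "G = A * C - B^2"
  have Gp: "G > 0" using G G_def by simp
  have Ap: "A > 0"
  proof (rule ccontr)
    assume "\<not> A > 0" hence "A = 0" using Ann by simp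
    thus False using G by simp
  qed
  define w1 where "w1 = (C*l1 - B*l2)/G"
  define w2 where "w2 = (A*l2 - B*l1)/G"
  have bil: "l1 * x + l2 * y = (A*w1+B*w2)*x + (B*w1+C*w2)*y" for x y
  proof -
    have "A*w1+B*w2 = (A*(C*l1 - B*l2) + B*(A*l2 - B*l1))/G" unfolding w1_def w2_def by (simp add: add_divide_distrib)
    also have "A*(C*l1 - B*l2) + B*(A*l2 - B*l1) = G * l1" unfolding G_def by (simp add: algebra_simps power2_eq_square)
    finally have "A*w1+B*w2 = l1" using Gp by simp
    moreover have "B*w1+C*w2 = (B*(C*l1 - B*l2) + C*(A*l2 - B*l1))/G" unfolding w1_def w2_def by (simp add: add_divide_distrib)
    moreover have "B*(C*l1 - B*l2) + C*(A*l2 - B*l1) = G * l2" unfolding G_def by (simp add: algebra_simps power2_eq_square)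
    ultimately have "A*w1+B*w2 = l1 \<and> B*w1+C*w2 = l2" using Gp by simp
    then show ?thesis by simp
  qed
  have Qpos: "A * x^2 + 2*B*x*y + C*y^2 > 0" if "x \<noteq> 0 \<or> y \<noteq> 0" for x y
  proof -
    have e: "A * (A * x^2 + 2*B*x*y + C*y^2) = (A*x + B*y)^2 + G * y^2"
      unfolding G_def by (simp add: algebra_simps power2_eq_square)
    have "(A*x + B*y)^2 + G * y^2 > 0"
    proof (cases "y = 0")
      case True then have "x \<noteq> 0" using that by simp
      then show ?thesis using True Ap by simp
    next
      case False then show ?thesis using Gp by (simp add: add_nonneg_pos)
    qed
    then have "A * (A * x^2 + 2*B*x*y + C*y^2) > 0" using e by simp
    then show ?thesis using Ap by (simp add: zero_less_mult_iff)
  qed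
  have Rp: "R m > 0" if "1 \<le> m" "m \<le> k+1" for m
  proof -
    have "c m \<noteq> 0 \<or> s m \<noteq> 0" using unit[OF that] by auto
    hence "R m ^2 > 0" using RQ[OF that] Qpos by simp
    thus ?thesis using Rnn[OF that] by (simp add: less_le)
  qed
  define M1 where "M1 i = R (i+1) * c i + R i * c (i+1)" for i
  define M2 where "M2 i = R (i+1) * s i + R i * s (i+1)" for i
  define g where "g i = M1 i * w2 - M2 i * w1" for i
  have sgn: "(d i > 0 \<longrightarrow> g i < 0) \<and> (d i < 0 \<longrightarrow> g i > 0)" if i: "1 \<le> i" "i \<le> k" for i
  proof -
    let ?p = "R i" and ?r = "R (i+1)"
    have p: "?p > 0" using Rp i by simp
    have r: "?r > 0" using Rp i by simp
    have dv: "dV i (i+1) > 0" using dV_succ i by simp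
    define X1 where "X1 = ?r * c i - ?p * c (i+1)"
    define X2 where "X2 = ?r * s i - ?p * s (i+1)"
    have "c i * X2 - s i * X1 = - ?p * dV i (i+1)" unfolding X1_def X2_def dV_def by (simp add: algebra_simps)
    hence "X1 \<noteq> 0 \<or> X2 \<noteq> 0" using p dv by auto
    hence Qd: "A * X1^2 + 2*B*X1*X2 + C*X2^2 > 0" by (rule Qpos)
    have e1: "b i * ?p = (A*w1+B*w2)*c i + (B*w1+C*w2)* s i" using bL[of i] bil i by simp
    have e2: "b (i+1) * ?r = (A*w1+B*w2)*c (i+1) + (B*w1+C*w2)* s (i+1)" using bL[of "i+1"] bil i by simp
    have key: "2*?p*?r*dV i (i+1)*(?r*((A*w1+B*w2)*c i+(B*w1+C*w2)* s i)-?p*((A*w1+B*w2)*c (i+1)+(B*w1+C*w2)* s (i+1)))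
       + (A*X1^2+2*B*X1*X2+C*X2^2)*g i = 0"
      unfolding X1_def X2_def g_def M1_def M2_def dV_def
      by (rule alg_id) (use RQ[of i] RQ[of "i+1"] i in simp_all)
    have "?r*((A*w1+B*w2)*c i+(B*w1+C*w2)* s i)-?p*((A*w1+B*w2)*c (i+1)+(B*w1+C*w2)* s (i+1))
        = ?r*(b i*?p) - ?p*(b (i+1)*?r)" by (simp only: e1 e2)
    also have "\<dots> = ?p * ?r * d i" unfolding d_def by (simp add: algebra_simps)
    finally have dd: "?r*((A*w1+B*w2)*c i+(B*w1+C*w2)* s i)-?p*((A*w1+B*w2)*c (i+1)+(B*w1+C*w2)* s (i+1))
        = ?p * ?r * d i" .
    have key1: "2*?p*?r*dV i (i+1)*(?p * ?r * d i) + (A*X1^2+2*B*X1*X2+C*X2^2)*g i = 0"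
      using key unfolding dd .
    define K where "K = 2*(?p*?r)^2*dV i (i+1)"
    define q where "q = A*X1^2+2*B*X1*X2+C*X2^2"
    have key2: "K * d i = - (q * g i)"
      using key1 unfolding K_def q_def by (simp add: algebra_simps power2_eq_square)
    have pp: "K > 0" using p r dv unfolding K_def by simp
    have qp: "q > 0" using Qd unfolding q_def .
    show ?thesis
    proof (intro conjI impI)
      assume "d i > 0"
      hence "K * d i > 0" using pp by simp
      hence "q * g i < 0" using key2 by linarith
      thus "g i < 0" using qp by (simp add: mult_less_0_iff)
    next
      assume "d i < 0"
      hence "K * d i < 0" using pp by (simp add: mult_pos_neg)
      hence "q * g i > 0" using key2 by linarith
      thus "g i > 0" using qp by (simp add: zero_less_mult_iff)
    qed
  qed
  have M2p: "M2 i > 0" if i: "1 \<le> i" "i \<le> k" for i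
  proof (cases "i = k")
    case True
    have "R (k+1) * s k > 0" using Rp[of "k+1"] sV[of k] k2 by simp
    then show ?thesis unfolding M2_def using True sk by simp
  next
    case False
    have "R i * s (i+1) > 0" using Rp[of i] sV[of "i+1"] i False by simp
    moreover have "R (i+1) * s i \<ge> 0" using Rp[of "i+1"] sV[of i] i s1 by (cases "i=1") auto
    ultimately show ?thesis unfolding M2_def by simp
  qed
  have Mdet: "M1 i * M2 l - M2 i * M1 l \<ge> 0" if il: "1 \<le> i" "i < l" "l \<le> k" for i l
  proof -
    have e: "M1 i * M2 l - M2 i * M1 l = R (i+1) * R (l+1) * dV i l + R (i+1) * R l * dV i (l+1)
       + R i * R (l+1) * dV (i+1) l + R i * R l * dV (i+1) (l+1)"
      unfolding M1_def M2_def dV_def by (simp add: algebra_simps)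
    have "R (i+1) * R (l+1) * dV i l \<ge> 0" using Rp[of "i+1"] Rp[of "l+1"] dV_ge[of i l] il by simp
    moreover have "R (i+1) * R l * dV i (l+1) \<ge> 0" using Rp[of "i+1"] Rp[of "l"] dV_ge[of i "l+1"] il by simp
    moreover have "R i * R (l+1) * dV (i+1) l \<ge> 0" using Rp[of "i"] Rp[of "l+1"] dV_ge[of "i+1" l] il by simp
    moreover have "R i * R l * dV (i+1) (l+1) \<ge> 0" using Rp[of "i"] Rp[of "l"] dV_ge[of "i+1" "l+1"] il by simp
    ultimately show ?thesis using e by linarith
  qed
  have gid: "M2 l * g i - M2 i * g l = w2 * (M1 i * M2 l - M2 i * M1 l)" for i l
    unfolding g_def by (simp add: algebra_simps)
  show ?thesis
  proof (cases "w2 \<ge> 0")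
    case True
    show ?thesis
    proof (rule mono_lemma[OF k2 detU d_sum1 d_sum2])
      fix i l assume il: "1 \<le> i" "i < l" "l \<le> k"
      show "\<not> (d i > 0 \<and> d l < 0)"
      proof
        assume h: "d i > 0 \<and> d l < 0"
        have gi: "g i < 0" using sgn[of i] h il by simp
        have gl: "g l > 0" using sgn[of l] h il by simp
        have "w2 * (M1 i * M2 l - M2 i * M1 l) \<ge> 0" using True Mdet[OF il] by simp
        hence "M2 l * g i \<ge> M2 i * g l" using gid[of l i] by simp
        moreover have "M2 l * g i < 0" using M2p[of l] gi il by (simp add: mult_pos_neg)
        moreover have "M2 i * g l > 0" using M2p[of i] gl il by simp
        ultimately show False by simp
      qed
    qed
  next
    case False
    have s1': "(\<Sum>i=1..k. (- d i) * U1 i) = 0" using d_sum1 by (simp add: sum_negf)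
    have s2': "(\<Sum>i=1..k. (- d i) * U2 i) = 0" using d_sum2 by (simp add: sum_negf)
    have "\<forall>i\<in>{1..k}. - d i = 0"
    proof (rule mono_lemma[OF k2 detU s1' s2'])
      fix i l assume il: "1 \<le> i" "i < l" "l \<le> k"
      show "\<not> (- d i > 0 \<and> - d l < 0)"
      proof
        assume h: "- d i > 0 \<and> - d l < 0"
        have gi: "g i > 0" using sgn[of i] h il by simp
        have gl: "g l < 0" using sgn[of l] h il by simp
        have "w2 * (M1 i * M2 l - M2 i * M1 l) \<le> 0" using False Mdet[OF il]
          by (simp add: mult_nonpos_nonneg)
        hence "M2 l * g i \<le> M2 i * g l" using gid[of l i] by simp
        moreover have "M2 l * g i > 0" using M2p[of l] gi il by simp
        moreover have "M2 i * g l < 0" using M2p[of i] gl il by (simp add: mult_pos_neg)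
        ultimately show False by simp
      qed
    qed
    thus ?thesis by simp
  qed
qed

end

lemma aux_le: "(x::real) * y \<le> 0 \<Longrightarrow> y > 0 \<Longrightarrow> x \<le> 0" by (simp add: mult_le_0_iff)
lemma aux_ge: "(x::real) * y \<ge> 0 \<Longrightarrow> y > 0 \<Longrightarrow> x \<ge> 0" by (simp add: zero_le_mult_iff)
context geo begin

lemma caseB:
  assumes G: "B^2 = A * C"
  shows "\<forall>i\<in>{1..k}. d i = 0"
proof -
  obtain n1 n2 where Qn: "\<And>x y. A*x^2+2*B*x*y+C*y^2 = (n1*x+n2*y)^2"
  proof (cases "A > 0")
    case True
    have "A*x^2+2*B*x*y+C*y^2 = (sqrt A*x+(B/sqrt A)*y)^2" for x y
    proof -
      have sA: "sqrt A ^2 = A" using True by simp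
      have "(sqrt A*x+(B/sqrt A)*y)^2 = sqrt A^2 * x^2 + 2*B*x*y + B^2/(sqrt A^2) * y^2"
        using True by (simp add: power2_eq_square field_simps)
      also have "\<dots> = A*x^2+2*B*x*y+C*y^2" using sA G True by (simp add: power2_eq_square)
      finally show ?thesis by simp
    qed
    then show ?thesis by (rule that)
  next
    case False
    hence A0: "A = 0" using Ann by simp
    hence "B = 0" using G by simp
    hence "A*x^2+2*B*x*y+C*y^2 = (0*x+sqrt C*y)^2" for x y using A0 Cnn by (simp add: power_mult_distrib)
    then show ?thesis by (rule that)
  qed
  define \<tau> where "\<tau> m = n1 * c m + n2 * s m" for m
  define L where "L m = l1 * c m + l2 * s m" for m
  define D where "D = l1 * n2 - l2 * n1"
  have Rt: "R m = \<bar>\<tau> m\<bar>" if "1 \<le> m" "m \<le> k+1" for m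
  proof -
    have "R m ^2 = \<bar>\<tau> m\<bar>^2" using RQ[OF that] Qn unfolding \<tau>_def by simp
    thus ?thesis using Rnn[OF that] power2_eq_iff_nonneg[of "R m" "\<bar>\<tau> m\<bar>"] by simp
  qed
  have bL': "b m * R m = L m" if "1 \<le> m" "m \<le> k+1" for m using bL[OF that] unfolding L_def .
  have I1: "L a * \<tau> b' - L b' * \<tau> a = D * dV a b'" for a b'
    unfolding L_def \<tau>_def D_def dV_def by (simp add: algebra_simps)
  have tk: "\<tau> (k+1) = - \<tau> 1" unfolding \<tau>_def using c1 s1 ck sk by simp
  have K: "d i * R i * R (i+1) * \<tau> i = \<bar>\<tau> i\<bar> * D * dV i (i+1)"
    if i: "1 \<le> i" "i \<le> k" and tt: "\<tau> i * \<tau> (i+1) > 0" for i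
  proof -
    have "d i * R i * R (i+1) = (b i * R i) * R (i+1) - (b (i+1) * R (i+1)) * R i"
      unfolding d_def by (simp add: algebra_simps)
    also have "\<dots> = L i * \<bar>\<tau> (i+1)\<bar> - L (i+1) * \<bar>\<tau> i\<bar>"
      using bL'[of i] bL'[of "i+1"] Rt[of i] Rt[of "i+1"] i by simp
    finally have e: "d i * R i * R (i+1) = L i * \<bar>\<tau> (i+1)\<bar> - L (i+1) * \<bar>\<tau> i\<bar>" .
    show ?thesis
    proof (cases "\<tau> i > 0")
      case True
      hence "\<tau> (i+1) > 0" using tt by (simp add: zero_less_mult_iff)
      then show ?thesis using e True I1[of i "i+1"] by simp
    next
      case False
      hence "\<tau> i < 0" using tt by (cases "\<tau> i = 0") auto
      hence "\<tau> (i+1) < 0" using tt by (simp add: zero_less_mult_iff)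
      hence "d i * R i * R (i+1) = - (D * dV i (i+1))" using e \<open>\<tau> i < 0\<close> I1[of i "i+1"] by (simp add: algebra_simps)
      hence "d i * R i * R (i+1) * \<tau> i = - (D * dV i (i+1)) * \<tau> i" by simp
      then show ?thesis using \<open>\<tau> i < 0\<close> by (simp add: algebra_simps)
    qed
  qed
  have dVk: "dV m (k+1) = s m" for m unfolding dV_def using ck sk by simp
  show ?thesis
  proof (cases "\<exists>j\<in>{1..k}. \<tau> j = 0")
    case True
    then obtain j where j: "1 \<le> j" "j \<le> k" "\<tau> j = 0" by auto
    have Lj: "L j = 0" using bL'[of j] Rt[of j] j by simp
    have D0: "D = 0"
    proof (cases "j = 1")
      case True
      have "dV 1 2 > 0" using detV[of 1 2] k2 unfolding dV_def by simp
      then show ?thesis using I1[of j 2] Lj j True by simp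
    next
      case False
      have "dV j (k+1) > 0" using sV[of j] j False dVk by simp
      then show ?thesis using I1[of j "k+1"] Lj j by simp
    qed
    define lam where "lam = n2 * c j - n1 * s j"
    have tl: "\<tau> m = lam * dV j m" if "1 \<le> m" "m \<le> k+1" for m
    proof -
      have "\<tau> m * (c j^2 + s j^2) = \<tau> j * (c j * c m + s j * s m) + lam * dV j m"
        unfolding \<tau>_def lam_def dV_def by (simp add: algebra_simps power2_eq_square)
      thus ?thesis using unit[of j] j by simp
    qed
    have l0: "lam \<noteq> 0"
    proof
      assume "lam = 0"
      obtain m where m: "m \<in> {1..k}" "R m > 0" using Rpos by auto
      then show False using tl[of m] Rt[of m] \<open>lam = 0\<close> by simp
    qed
    have dz: "d i = 0" if i: "1 \<le> i" "i \<le> k" "i \<noteq> j" "i+1 \<noteq> j" "\<not> (j = 1 \<and> i = k)" for i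
    proof -
      have pr: "dV j i * dV j (i+1) > 0"
      proof (cases "j < i")
        case True
        have a1: "dV j i > 0" using detV[of j i] True i j unfolding dV_def by simp
        have a2: "dV j (i+1) > 0"
        proof (cases "i = k")
          case True
          then show ?thesis using dVk sV[of j] i j \<open>j < i\<close> by simp
        next
          case False then show ?thesis using detV[of j "i+1"] \<open>j<i\<close> i j unfolding dV_def by simp
        qed
        show ?thesis using a1 a2 by simp
      next
        case False
        hence ij: "i + 1 < j" using i by simp
        have a1: "dV j i < 0" using detV[of i j] ij i j unfolding dV_def by (simp add: algebra_simps)
        have a2: "dV j (i+1) < 0" using detV[of "i+1" j] ij i j unfolding dV_def by (simp add: algebra_simps)
        show ?thesis using a1 a2 by (simp add: mult_neg_neg)
      qed
      have "\<tau> i * \<tau> (i+1) = lam^2 * (dV j i * dV j (i+1))"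
        using tl[of i] tl[of "i+1"] i by (simp add: power2_eq_square algebra_simps)
      also have "\<dots> > 0" using pr l0 by simp
      finally have tt: "\<tau> i * \<tau> (i+1) > 0" .
      have "d i * R i * R (i+1) * \<tau> i = 0" using K[OF i(1,2) tt] D0 by simp
      moreover have "R i \<noteq> 0" "R (i+1) \<noteq> 0" "\<tau> i \<noteq> 0" using tt Rt[of i] Rt[of "i+1"] i by auto
      ultimately show ?thesis by simp
    qed
    show ?thesis
    proof (cases "j = 1")
      case True
      show ?thesis
        by (rule two_support[OF k2 detU d_sum1 d_sum2, of 1 k]) (use k2 dz True in auto)
    next
      case False
      show ?thesis
        by (rule two_support[OF k2 detU d_sum1 d_sum2, of "j-1" j]) (use j dz False in auto)
    qed
  next
    case False
    hence tnz: "\<tau> m \<noteq> 0" if "1 \<le> m" "m \<le> k+1" for m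
      using that tk k2 by (cases "m = k+1") auto
    have t1: "\<tau> 1 \<noteq> 0" using tnz[of 1] by simp
    define P where "P m = (2 \<le> m \<and> m \<le> k+1 \<and> \<tau> m * \<tau> 1 < 0)" for m
    define j where "j = (LEAST m. P m)"
    have t1sq: "\<tau> 1 * \<tau> 1 > 0" using t1 by (auto simp add: zero_less_mult_iff linorder_neq_iff)
    have Pk: "P (k+1)" unfolding P_def using tk t1sq k2 by simp
    have jP: "P j" unfolding j_def using Pk by (rule LeastI)
    have jle: "\<And>m. P m \<Longrightarrow> j \<le> m" unfolding j_def by (rule Least_le)
    have before: "\<tau> m * \<tau> 1 > 0" if "1 \<le> m" "m < j" for m
    proof (cases "m = 1")
      case True then show ?thesis using t1sq by simp
    next
      case False
      have "\<not> P m" using jle[of m] that by auto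
      moreover have "m \<le> k+1" using that jP unfolding P_def by simp
      ultimately have "\<tau> m * \<tau> 1 \<ge> 0" using False that unfolding P_def by auto
      moreover have "\<tau> m * \<tau> 1 \<noteq> 0" using tnz[of m] t1 that \<open>m \<le> k+1\<close> by simp
      ultimately show ?thesis by linarith
    qed
    have after: "\<tau> m * \<tau> 1 < 0" if "j \<le> m" "m \<le> k+1" for m
    proof (cases "m = j \<or> m = k+1")
      case True then show ?thesis using jP Pk unfolding P_def by auto
    next
      case False
      hence jm: "j < m" "m \<le> k" using that by auto
      show ?thesis
      proof (rule ccontr)
        assume "\<not> ?thesis"
        hence mp: "\<tau> m * \<tau> 1 > 0" using tnz[of m] t1 jm jP unfolding P_def by (simp add: less_le)
        have pl: "\<tau> 1 * dV j m - \<tau> j * dV 1 m + \<tau> m * dV 1 j = 0"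
          unfolding \<tau>_def dV_def by (simp add: algebra_simps)
        have "\<tau> 1 * \<tau> 1 * dV j m - (\<tau> j * \<tau> 1) * dV 1 m + (\<tau> m * \<tau> 1) * dV 1 j = 0"
          using arg_cong[OF pl, of "\<lambda>x. x * \<tau> 1"] by (simp add: algebra_simps)
        moreover have "\<tau> 1 * \<tau> 1 * dV j m > 0" using detV[of j m] jm jP t1sq unfolding P_def dV_def by simp
        moreover have "(\<tau> j * \<tau> 1) * dV 1 m < 0" using detV[of 1 m] jm jP unfolding P_def dV_def
          by (simp add: mult_neg_pos)
        moreover have "(\<tau> m * \<tau> 1) * dV 1 j > 0" using detV[of 1 j] jm jP mp unfolding P_def dV_def
          by simp
        ultimately show False by linarith
      qed
    qed
    have j2: "2 \<le> j" "j \<le> k+1" using jP unfolding P_def by auto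
    have tt: "\<tau> i * \<tau> (i+1) > 0" if i: "1 \<le> i" "i \<le> k" "i \<noteq> j - 1" for i
    proof -
      have "(\<tau> i * \<tau> 1) * (\<tau> (i+1) * \<tau> 1) > 0"
      proof (cases "i + 1 < j")
        case True then show ?thesis using before[of i] before[of "i+1"] i by simp
      next
        case False
        hence "j \<le> i" using i j2 by simp
        then show ?thesis using after[of i] after[of "i+1"] i by (simp add: mult_neg_neg)
      qed
      hence "(\<tau> i * \<tau> (i+1)) * (\<tau> 1 * \<tau> 1) > 0" by (simp add: algebra_simps)
      thus ?thesis using t1 by (simp add: zero_less_mult_iff)
    qed
    have Xeq: "(\<tau> 1 * D * d i) * (R i * R (i+1) * \<tau> i * \<tau> i) = \<bar>\<tau> i\<bar> * D^2 * dV i (i+1) * (\<tau> i * \<tau> 1)"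
      if i: "1 \<le> i" "i \<le> k" "i \<noteq> j - 1" for i
    proof -
      have "(\<tau> 1 * D * d i) * (R i * R (i+1) * \<tau> i * \<tau> i) = (d i * R i * R (i+1) * \<tau> i) * (\<tau> 1 * D * \<tau> i)"
        by (simp add: algebra_simps)
      also have "\<dots> = \<bar>\<tau> i\<bar> * D^2 * dV i (i+1) * (\<tau> i * \<tau> 1)"
        using K[OF i(1,2) tt[OF i]] by (simp add: algebra_simps power2_eq_square)
      finally show ?thesis .
    qed
    have posR: "R i * R (i+1) * \<tau> i * \<tau> i > 0" if i: "1 \<le> i" "i \<le> k" for i
    proof -
      have "\<tau> i * \<tau> i > 0" using tnz[of i] i by (auto simp add: zero_less_mult_iff linorder_neq_iff)
      moreover have "\<bar>\<tau> i\<bar> * \<bar>\<tau> (i+1)\<bar> > 0" using tnz[of i] tnz[of "i+1"] i by simp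
      ultimately have "(\<bar>\<tau> i\<bar> * \<bar>\<tau> (i+1)\<bar>) * (\<tau> i * \<tau> i) > 0" by simp
      thus ?thesis using Rt[of i] Rt[of "i+1"] i by (simp add: algebra_simps)
    qed
    define e where "e i = - (\<tau> 1 * D * d i)" for i
    have es1: "(\<Sum>i=1..k. e i * U1 i) = 0"
    proof -
      have "(\<Sum>i=1..k. e i * U1 i) = - (\<tau> 1 * D) * (\<Sum>i=1..k. d i * U1 i)"
        unfolding e_def sum_distrib_left by (rule sum.cong) (simp_all add: algebra_simps)
      thus ?thesis using d_sum1 by simp
    qed
    have es2: "(\<Sum>i=1..k. e i * U2 i) = 0"
    proof -
      have "(\<Sum>i=1..k. e i * U2 i) = - (\<tau> 1 * D) * (\<Sum>i=1..k. d i * U2 i)"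
        unfolding e_def sum_distrib_left by (rule sum.cong) (simp_all add: algebra_simps)
      thus ?thesis using d_sum2 by simp
    qed
    have e0: "\<forall>i\<in>{1..k}. e i = 0"
    proof (rule pivot_lemma[OF k2 detU es1 es2, of "j-1"])
      show "1 \<le> j - 1" "j - 1 \<le> k" using j2 by auto
    next
      fix i assume i: "1 \<le> i" "i < j - 1"
      hence ik: "i \<le> k" "i \<noteq> j - 1" using j2 by auto
      have "\<bar>\<tau> i\<bar> * D^2 * dV i (i+1) \<ge> 0" using dV_succ[of i] i ik by simp
      moreover have "\<tau> i * \<tau> 1 > 0" using before[of i] i by simp
      ultimately have "\<bar>\<tau> i\<bar> * D^2 * dV i (i+1) * (\<tau> i * \<tau> 1) \<ge> 0" by simp
      moreover have "(\<tau> 1 * D * d i) * (R i * R (i+1) * \<tau> i * \<tau> i) = \<bar>\<tau> i\<bar> * D^2 * dV i (i+1) * (\<tau> i * \<tau> 1)"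
        by (rule Xeq) (use i ik in auto)
      ultimately have "(\<tau> 1 * D * d i) * (R i * R (i+1) * \<tau> i * \<tau> i) \<ge> 0" by linarith
      hence "\<tau> 1 * D * d i \<ge> 0" using posR[of i] i ik aux_ge[of "\<tau> 1 * D * d i"] by blast
      thus "e i \<le> 0" unfolding e_def by simp
    next
      fix i assume i: "j - 1 < i" "i \<le> k"
      hence ik: "1 \<le> i" "i \<noteq> j - 1" "j \<le> i" using j2 by auto
      have "\<bar>\<tau> i\<bar> * D^2 * dV i (i+1) \<ge> 0" using dV_succ[of i] i ik by simp
      moreover have "\<tau> i * \<tau> 1 < 0" using after[of i] i ik by simp
      ultimately have "\<bar>\<tau> i\<bar> * D^2 * dV i (i+1) * (\<tau> i * \<tau> 1) \<le> 0"
        by (simp add: mult_nonneg_nonpos)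
      moreover have "(\<tau> 1 * D * d i) * (R i * R (i+1) * \<tau> i * \<tau> i) = \<bar>\<tau> i\<bar> * D^2 * dV i (i+1) * (\<tau> i * \<tau> 1)"
        by (rule Xeq) (use i ik in auto)
      ultimately have "(\<tau> 1 * D * d i) * (R i * R (i+1) * \<tau> i * \<tau> i) \<le> 0" by linarith
      hence "\<tau> 1 * D * d i \<le> 0" using posR[of i] i ik aux_le[of "\<tau> 1 * D * d i"] by blast
      thus "e i \<ge> 0" unfolding e_def by simp
    qed
    show ?thesis
    proof (cases "D = 0")
      case False
      then show ?thesis using e0 t1 unfolding e_def by simp
    next
      case True
      have dz: "d i = 0" if i: "1 \<le> i" "i \<le> k" "i \<noteq> j - 1" for i
      proof -
        have "d i * R i * R (i+1) * \<tau> i = 0" using K[OF i(1,2) tt[OF i]] True by simp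
        moreover have "R i * R (i+1) * \<tau> i * \<tau> i > 0" using posR i by simp
        ultimately show ?thesis by auto
      qed
      show ?thesis
        by (rule pivot_lemma[OF k2 detU d_sum1 d_sum2, of "j-1"]) (use j2 dz in force)+
    qed
  qed
qed

lemma d_zero: "\<forall>i\<in>{1..k}. d i = 0"
  using caseA caseB Ann Cnn BAC by (cases "A * C - B^2 > 0") auto

lemma b_zero: "\<forall>i\<in>{1..k}. b i - b (i+1) = 0"
  using d_zero unfolding d_def .

end

lemma vd1: "((\<lambda>t::real. x * cis (t * c)) has_vector_derivative (x * (\<i> * of_real c))) (at 0)"
  unfolding has_vector_derivative_def
  by (auto intro!: derivative_eq_intros ext simp: scaleR_conv_of_real algebra_simps)
lemma vd2: "((\<lambda>t::real. y * cnj (cis (t * c))) has_vector_derivative (- (y * (\<i> * of_real c)))) (at 0)"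
proof -
  have e: "(\<lambda>t::real. y * cnj (cis (t * c))) = (\<lambda>t. y * cis (t * (-c)))"
    by (simp add: cis_cnj)
  show ?thesis unfolding e has_vector_derivative_def
    by (auto intro!: derivative_eq_intros ext simp: scaleR_conv_of_real algebra_simps)
qed

lemma detU_lemma:
  assumes adm: "admissible_S k u" and cvx: "convex_S k u"
  shows "1 \<le> i \<Longrightarrow> i < j \<Longrightarrow> j \<le> k \<Longrightarrow>
    real_of_int (fst (u i)) * real_of_int (snd (u j)) - real_of_int (snd (u i)) * real_of_int (fst (u j)) > 0"
proof (induction j)
  case 0 then show ?case by simp
next
  case (Suc j)
  have hp: "real_of_int (snd (u m)) > 0 \<or> (real_of_int (snd (u m)) = 0 \<and> real_of_int (fst (u m)) > 0)"
    if "1 \<le> m" "m \<le> k" for m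
    using adm that unfolding admissible_S_def by force
  have cons: "real_of_int (fst (u j)) * real_of_int (snd (u (Suc j))) - real_of_int (snd (u j)) * real_of_int (fst (u (Suc j))) > 0"
  proof -
    have "Suc j \<in> {2..k}" using Suc.prems by auto
    then have "det2 (rvec (u (Suc j - 1))) (rvec (u (Suc j))) > 0" using cvx unfolding convex_S_def by blast
    then show ?thesis unfolding det2_def rvec_def by simp
  qed
  show ?case
  proof (cases "j = i")
    case True then show ?thesis using cons by simp
  next
    case False
    hence ij: "i < j" using Suc.prems by simp
    have ih: "real_of_int (fst (u i)) * real_of_int (snd (u j)) - real_of_int (snd (u i)) * real_of_int (fst (u j)) > 0"
      using Suc.IH Suc.prems ij by simp
    show ?thesis
      by (rule hp_trans[OF hp[of i] hp[of j] hp[of "Suc j"] ih cons]) (use Suc.prems ij in auto)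
  qed
qed

theorem mainTheorem4:
  fixes k :: nat and u :: "nat \<Rightarrow> int \<times> int" and \<theta> :: "nat \<Rightarrow> real"
    and Bs :: "(nat \<Rightarrow> real) \<Rightarrow> (nat \<Rightarrow> real) \<Rightarrow> real"
  assumes "admissible_S k u" and "convex_S k u"
    and "conformal_data k \<theta>" and "Bstar_ok k u \<theta> Bs"
  shows "\<forall>p \<in> Pset k u Bs. \<forall>a \<in> gset k u. a \<noteq> (\<lambda>_. 0) \<longrightarrow>
           (\<exists>a' \<in> gset k u. dfun (\<lambda>q. Bs (nu1 k q) a') p (I1 (Afield a p)) \<noteq> 0)"
proof (intro ballI impI)
  fix p a
  assume pP: "p \<in> Pset k u Bs" and ag: "a \<in> gset k u" and an: "a \<noteq> (\<lambda>_. 0)"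
  note adm = assms(1) and cvx = assms(2)
  have Badd: "\<And>\<xi> \<eta> a. Bs (\<lambda>i. \<xi> i + \<eta> i) a = Bs \<xi> a + Bs \<eta> a"
    and Bsm: "\<And>c \<xi> a. Bs (\<lambda>i. c * \<xi> i) a = c * Bs \<xi> a"
    and Bker: "\<And>\<xi>. supp_in k \<xi> \<Longrightarrow> (\<forall>a\<in>gset k u. Bs \<xi> a = 0) \<longleftrightarrow> \<xi> \<in> Wset k \<theta>"
    using assms(4) unfolding Bstar_ok_def by blast+
  have asupp: "supp_in k a" and asum: "(\<Sum>i\<in>{1..k}. a i *\<^sub>R vvec k u i) = 0"
    using ag unfolding gset_def by auto
  define \<rho> where "\<rho> i = (cmod (fst (p i)))^2 + (cmod (snd (p i)))^2" for i
  define cv where "cv i = (if i \<in> {1..k} then -2 * a i * \<rho> i else 0)" for i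
  define ev where "ev i = (if i \<in> {1..k} then (a i)^2 * ((cmod (fst (p i)))^2 - (cmod (snd (p i)))^2) else 0)" for i
  define X where "X = I1 (Afield a p)"
  have AF: "Afield a p m = (fst (p m) * (\<i> * of_real (a m)), - (snd (p m) * (\<i> * of_real (a m))))" for m
    unfolding Afield_def tact_def using vector_derivative_at[OF vd1] vector_derivative_at[OF vd2] by simp
  have Xm: "X m = (- (of_real (a m) * fst (p m)), of_real (a m) * snd (p m))" for m
    unfolding X_def I1_def AF by (simp add: algebra_simps)
  have nuexp: "nu1 k (\<lambda>m. p m + t *\<^sub>R X m) = (\<lambda>i. nu1 k p i + t * cv i + t^2 * ev i)" for t
  proof (rule ext)
    fix i
    show "nu1 k (\<lambda>m. p m + t *\<^sub>R X m) i = nu1 k p i + t * cv i + t^2 * ev i"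
    proof (cases "i \<in> {1..k}")
      case True
      have f: "fst (p i) + t *\<^sub>R fst (X i) = fst (p i) * of_real (1 - t * a i)"
        using Xm[of i] by (simp add: scaleR_conv_of_real algebra_simps)
      have s: "snd (p i) + t *\<^sub>R snd (X i) = snd (p i) * of_real (1 + t * a i)"
        using Xm[of i] by (simp add: scaleR_conv_of_real algebra_simps)
      have f2: "(cmod (fst (p i) + t *\<^sub>R fst (X i)))^2 = (cmod (fst (p i)))^2 * (1 - t * a i)^2"
        unfolding f norm_mult norm_of_real by (simp add: power_mult_distrib)
      have s2: "(cmod (snd (p i) + t *\<^sub>R snd (X i)))^2 = (cmod (snd (p i)))^2 * (1 + t * a i)^2"
        unfolding s norm_mult norm_of_real by (simp add: power_mult_distrib)
      have lhs: "nu1 k (\<lambda>m. p m + t *\<^sub>R X m) i = (cmod (fst (p i) + t *\<^sub>R fst (X i)))^2 - (cmod (snd (p i) + t *\<^sub>R snd (X i)))^2"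
        using True unfolding nu1_def by simp
      also have "\<dots> = (cmod (fst (p i)))^2 * (1 - t * a i)^2 - (cmod (snd (p i)))^2 * (1 + t * a i)^2"
        by (simp only: f2 s2)
      finally have lhs2: "nu1 k (\<lambda>m. p m + t *\<^sub>R X m) i = (cmod (fst (p i)))^2 * (1 - t * a i)^2 - (cmod (snd (p i)))^2 * (1 + t * a i)^2" .
      have rhs: "nu1 k p i + t * cv i + t^2 * ev i = ((cmod (fst (p i)))^2 - (cmod (snd (p i)))^2) + t * (-2 * a i * \<rho> i)
          + t^2 * ((a i)^2 * ((cmod (fst (p i)))^2 - (cmod (snd (p i)))^2))"
        using True unfolding nu1_def cv_def ev_def by simp
      show ?thesis unfolding lhs2 rhs \<rho>_def by (simp add: power2_eq_square algebra_simps)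
    next
      case False then show ?thesis unfolding nu1_def cv_def ev_def if_not_P[OF False] by simp
    qed
  qed
  have Blin: "Bs (\<lambda>i. f i + t * g i + t^2 * h i) a' = Bs f a' + t * Bs g a' + t^2 * Bs h a'" for f g h t a'
  proof -
    have "Bs (\<lambda>i. f i + t * g i + t^2 * h i) a' = Bs (\<lambda>i. f i + t * g i) a' + Bs (\<lambda>i. t^2 * h i) a'"
      using Badd[of "\<lambda>i. f i + t * g i" "\<lambda>i. t^2 * h i"] by simp
    also have "Bs (\<lambda>i. f i + t * g i) a' = Bs f a' + Bs (\<lambda>i. t * g i) a'"
      using Badd[of f "\<lambda>i. t * g i"] by simp
    finally show ?thesis using Bsm[of t g a'] Bsm[of "t^2" h a'] by simp
  qed
  have dfun_eq: "dfun (\<lambda>q. Bs (nu1 k q) a') p X = Bs cv a'" for a'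
  proof -
    have e: "(\<lambda>t. Bs (nu1 k (\<lambda>m. p m + t *\<^sub>R X m)) a') = (\<lambda>t. Bs (nu1 k p) a' + t * Bs cv a' + t^2 * Bs ev a')"
      unfolding nuexp by (rule ext) (rule Blin)
    have "((\<lambda>t. Bs (nu1 k p) a' + t * Bs cv a' + t^2 * Bs ev a') has_real_derivative Bs cv a') (at 0)"
      by (auto intro!: derivative_eq_intros)
    hence "deriv (\<lambda>t. Bs (nu1 k p) a' + t * Bs cv a' + t^2 * Bs ev a') 0 = Bs cv a'"
      by (rule DERIV_imp_deriv)
    thus ?thesis unfolding dfun_def e .
  qed
  show "\<exists>a' \<in> gset k u. dfun (\<lambda>q. Bs (nu1 k q) a') p (I1 (Afield a p)) \<noteq> 0"
  proof (rule ccontr)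
    assume H: "\<not> ?thesis"
    have "\<forall>a'\<in>gset k u. Bs cv a' = 0" using H dfun_eq unfolding X_def by auto
    moreover have "supp_in k cv" unfolding supp_in_def cv_def by auto
    ultimately have "cv \<in> Wset k \<theta>" using Bker by blast
    then obtain s t where cvst: "\<And>i. i \<in> {1..k} \<Longrightarrow> cv i = s * cos (\<theta> i / 2) + t * sin (\<theta> i / 2)"
      unfolding Wset_def zvec_def by auto
    have nW: "nu1 k p \<in> Wset k \<theta> \<and> nu2 k p \<in> Wset k \<theta> \<and> nu3 k p \<in> Wset k \<theta>"
    proof -
      have g: "\<forall>a\<in>gset k u. Bs (nu1 k p) a = 0" "\<forall>a\<in>gset k u. Bs (nu2 k p) a = 0" "\<forall>a\<in>gset k u. Bs (nu3 k p) a = 0"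
        using pP unfolding Pset_def by auto
      have "supp_in k (nu1 k p)" "supp_in k (nu2 k p)" "supp_in k (nu3 k p)"
        unfolding supp_in_def nu1_def nu2_def nu3_def by auto
      thus ?thesis using g Bker by blast
    qed
    obtain s1 t1 where n1: "\<And>i. i \<in> {1..k} \<Longrightarrow> nu1 k p i = s1 * cos (\<theta> i / 2) + t1 * sin (\<theta> i / 2)"
      using nW unfolding Wset_def zvec_def by auto
    obtain s2 t2 where n2: "\<And>i. i \<in> {1..k} \<Longrightarrow> nu2 k p i = s2 * cos (\<theta> i / 2) + t2 * sin (\<theta> i / 2)"
      using nW unfolding Wset_def zvec_def by auto
    obtain s3 t3 where n3: "\<And>i. i \<in> {1..k} \<Longrightarrow> nu3 k p i = s3 * cos (\<theta> i / 2) + t3 * sin (\<theta> i / 2)"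
      using nW unfolding Wset_def zvec_def by auto
    have th1: "\<theta> 1 = 0" and thr: "\<And>i. i \<in> {1..k} \<Longrightarrow> 0 \<le> \<theta> i \<and> \<theta> i < 2 * pi"
      and thmo: "\<And>i j. i \<in> {1..k} \<Longrightarrow> j \<in> {1..k} \<Longrightarrow> i < j \<Longrightarrow> \<theta> i < \<theta> j"
      using assms(3) unfolding conformal_data_def by auto
    have k2: "2 \<le> k"
    proof (rule ccontr)
      assume "\<not> 2 \<le> k"
      hence kk: "k = 0 \<or> k = 1" by auto
      obtain c :: "nat \<Rightarrow> int" where "(0::int, 1::int) = ((\<Sum>i\<in>{1..k}. c i * fst (u i)), (\<Sum>i\<in>{1..k}. c i * snd (u i)))"
        using adm unfolding admissible_S_def by blast
      hence "(\<Sum>i\<in>{1..k}. c i * snd (u i)) = 1" by simp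
      moreover have "snd (u 1) = 0" using adm unfolding admissible_S_def by auto
      ultimately show False using kk by auto
    qed
    define U1 where "U1 i = real_of_int (fst (u i))" for i
    define U2 where "U2 i = real_of_int (snd (u i))" for i
    define b where "b m = (if m = k+1 then - a 1 else a m)" for m
    define cc where "cc m = (if m = k+1 then -1 else cos (\<theta> m / 2))" for m
    define ss where "ss m = (if m = k+1 then 0 else sin (\<theta> m / 2))" for m
    define R where "R m = (if m = k+1 then \<rho> 1 else \<rho> m)" for m
    define A where "A = s1^2 + s2^2 + s3^2"
    define B where "B = s1*t1 + s2*t2 + s3*t3"
    define C where "C = t1^2 + t2^2 + t3^2"
    define l1 where "l1 = - s / 2"
    define l2 where "l2 = - t / 2"
    have detU: "\<And>i j. 1 \<le> i \<Longrightarrow> i < j \<Longrightarrow> j \<le> k \<Longrightarrow> U1 i * U2 j - U2 i * U1 j > 0"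
      unfolding U1_def U2_def using detU_lemma[OF adm cvx] by blast
    have vf: "fst (vvec k u i) = (if i = 1 then U1 1 + U1 k else U1 i - U1 (i-1))"
      "snd (vvec k u i) = (if i = 1 then U2 1 + U2 k else U2 i - U2 (i-1))" for i
      unfolding vvec_def rvec_def U1_def U2_def by auto
    have sum1: "(\<Sum>i=1..k. (b i - b (i+1)) * U1 i) = 0"
    proof -
      have "(\<Sum>i=1..k. a i * (if i = 1 then U1 1 + U1 k else U1 i - U1 (i-1))) = fst (\<Sum>i\<in>{1..k}. a i *\<^sub>R vvec k u i)"
        by (simp add: fst_sum vf)
      also have "\<dots> = 0" using asum by simp
      finally show ?thesis using abel[OF k2, of a U1] unfolding b_def by simp
    qed
    have sum2: "(\<Sum>i=1..k. (b i - b (i+1)) * U2 i) = 0"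
    proof -
      have "(\<Sum>i=1..k. a i * (if i = 1 then U2 1 + U2 k else U2 i - U2 (i-1))) = snd (\<Sum>i\<in>{1..k}. a i *\<^sub>R vvec k u i)"
        by (simp add: snd_sum vf)
      also have "\<dots> = 0" using asum by simp
      finally show ?thesis using abel[OF k2, of a U2] unfolding b_def by simp
    qed
    have c1: "cc 1 = 1" and s1: "ss 1 = 0" and ck: "cc (k+1) = -1" and sk: "ss (k+1) = 0"
      unfolding cc_def ss_def using th1 k2 by auto
    have unit: "\<And>m. 1 \<le> m \<Longrightarrow> m \<le> k+1 \<Longrightarrow> cc m ^ 2 + ss m ^ 2 = 1"
      unfolding cc_def ss_def by simp
    have detV: "\<And>i j. 1 \<le> i \<Longrightarrow> i < j \<Longrightarrow> j \<le> k \<Longrightarrow> cc i * ss j - ss i * cc j > 0"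
    proof -
      fix i j assume h: "1 \<le> i" "i < j" "j \<le> k"
      have "cc i * ss j - ss i * cc j = sin (\<theta> j / 2 - \<theta> i / 2)"
        unfolding cc_def ss_def using h by (simp add: sin_diff algebra_simps)
      moreover have "0 < \<theta> j / 2 - \<theta> i / 2" using thmo[of i j] h by simp
      moreover have "\<theta> j / 2 - \<theta> i / 2 < pi" using thr[of i] thr[of j] h by simp
      ultimately show "cc i * ss j - ss i * cc j > 0" by (simp add: sin_gt_zero)
    qed
    have sV: "\<And>m. 2 \<le> m \<Longrightarrow> m \<le> k \<Longrightarrow> ss m > 0"
    proof -
      fix m assume h: "2 \<le> m" "m \<le> k"
      have "0 < \<theta> m / 2" using thmo[of 1 m] h th1 by simp
      moreover have "\<theta> m / 2 < pi" using thr[of m] h by simp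
      ultimately show "ss m > 0" unfolding ss_def using h by (simp add: sin_gt_zero)
    qed
    have Rnn: "\<And>m. 1 \<le> m \<Longrightarrow> m \<le> k+1 \<Longrightarrow> R m \<ge> 0" unfolding R_def \<rho>_def by simp
    have rho_sq: "\<rho> m ^ 2 = A * cos (\<theta> m / 2) ^ 2 + 2 * B * cos (\<theta> m / 2) * sin (\<theta> m / 2) + C * sin (\<theta> m / 2) ^ 2"
      if m: "m \<in> {1..k}" for m
    proof -
      have c2: "(Re (2 * \<i> * fst (p m) * snd (p m)))^2 + (Im (2 * \<i> * fst (p m) * snd (p m)))^2
          = 4 * (cmod (fst (p m)))^2 * (cmod (snd (p m)))^2"
      proof -
        have "(Re (2 * \<i> * fst (p m) * snd (p m)))^2 + (Im (2 * \<i> * fst (p m) * snd (p m)))^2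
            = (cmod (2 * \<i> * fst (p m) * snd (p m)))^2" by (rule cmod_power2[symmetric])
        also have "\<dots> = 4 * (cmod (fst (p m)))^2 * (cmod (snd (p m)))^2"
          by (simp add: norm_mult power_mult_distrib)
        finally show ?thesis .
      qed
      have "\<rho> m ^ 2 = (nu1 k p m)^2 + (nu2 k p m)^2 + (nu3 k p m)^2"
        using m c2 unfolding \<rho>_def nu1_def nu2_def nu3_def by (simp add: power2_eq_square algebra_simps)
      also have "\<dots> = A * cos (\<theta> m / 2) ^ 2 + 2 * B * cos (\<theta> m / 2) * sin (\<theta> m / 2) + C * sin (\<theta> m / 2) ^ 2"
        unfolding n1[OF m] n2[OF m] n3[OF m] A_def B_def C_def by (simp add: power2_eq_square algebra_simps)
      finally show ?thesis .
    qed
    have RQ: "\<And>m. 1 \<le> m \<Longrightarrow> m \<le> k+1 \<Longrightarrow> R m ^ 2 = A * cc m ^ 2 + 2 * B * cc m * ss m + C * ss m ^ 2"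
    proof -
      fix m assume h: "1 \<le> m" "m \<le> k+1"
      show "R m ^ 2 = A * cc m ^ 2 + 2 * B * cc m * ss m + C * ss m ^ 2"
      proof (cases "m = k+1")
        case True
        have "\<rho> 1 ^ 2 = A" using rho_sq[of 1] k2 th1 by simp
        then show ?thesis using True unfolding R_def cc_def ss_def by simp
      next
        case False
        then show ?thesis using rho_sq[of m] h unfolding R_def cc_def ss_def by simp
      qed
    qed
    have arho: "a m * \<rho> m = l1 * cos (\<theta> m / 2) + l2 * sin (\<theta> m / 2)" if m: "m \<in> {1..k}" for m
      using cvst[OF m] m unfolding cv_def l1_def l2_def by (simp add: field_simps)
    have bL: "\<And>m. 1 \<le> m \<Longrightarrow> m \<le> k+1 \<Longrightarrow> b m * R m = l1 * cc m + l2 * ss m"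
    proof -
      fix m assume h: "1 \<le> m" "m \<le> k+1"
      show "b m * R m = l1 * cc m + l2 * ss m"
      proof (cases "m = k+1")
        case True
        have "a 1 * \<rho> 1 = l1" using arho[of 1] k2 th1 by simp
        then show ?thesis using True unfolding b_def R_def cc_def ss_def by simp
      next
        case False
        then show ?thesis using arho[of m] h unfolding b_def R_def cc_def ss_def by simp
      qed
    qed
    have Ann: "A \<ge> 0" and Cnn: "C \<ge> 0" unfolding A_def C_def by simp_all
    have BAC: "B^2 \<le> A * C"
    proof -
      have "A * C - B^2 = (s1*t2 - s2*t1)^2 + (s1*t3-s3*t1)^2 + (s2*t3-s3*t2)^2"
        unfolding A_def B_def C_def by (simp add: power2_eq_square algebra_simps)
      moreover have "(s1*t2 - s2*t1)^2 + (s1*t3-s3*t1)^2 + (s2*t3-s3*t2)^2 \<ge> 0" by simp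
      ultimately show ?thesis by linarith
    qed
    have Rpos: "\<exists>m\<in>{1..k}. R m > 0"
    proof -
      obtain m where m: "m \<in> {1..k}" "p m \<noteq> 0" using pP unfolding Pset_def by auto
      hence "fst (p m) \<noteq> 0 \<or> snd (p m) \<noteq> 0" by (cases "p m") (auto simp: zero_prod_def)
      hence "\<rho> m > 0" unfolding \<rho>_def by (auto simp: add_pos_nonneg add_nonneg_pos)
      thus ?thesis using m unfolding R_def by auto
    qed
    interpret G: geo k U1 U2 cc ss R b A B C l1 l2
      by unfold_locales (fact k2 detU sum1 sum2 c1 s1 ck sk unit detV sV Rnn RQ bL Ann Cnn BAC Rpos)+
    have bz: "\<forall>i\<in>{1..k}. b i - b (i+1) = 0" by (rule G.b_zero)
    have step: "a i = a (i+1)" if "1 \<le> i" "i < k" for i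
      using bz[rule_format, of i] that unfolding b_def by simp
    have last: "a k + a 1 = 0" using bz[rule_format, of k] k2 unfolding b_def by simp
    have all: "a i = a 1" if "1 \<le> i" "i \<le> k" for i
      using that
    proof (induction i rule: nat_induct_at_least)
      case base then show ?case by simp
    next
      case (Suc n) then show ?case using step[of n] by simp
    qed
    have "a 1 = 0" using all[of k] last k2 by simp
    hence "a i = 0" for i
      using all[of i] asupp unfolding supp_in_def by (cases "i \<in> {1..k}") auto
    hence "a = (\<lambda>_. 0)" by auto
    thus False using an by simp
  qed
qed

end
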